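(* Let $q>1$ be prime and $0<j\le q$. Then $\bar{\mathsf{L}}^j_q$ is the unique logic strongly maximal with respect to $\mathsf{CPL}$ that extends $\mathsf{L}^j_q$; in fact, $\bar{\mathsf{L}}^j_q$ is the only finitary structural logic $L$ with ${\vDash_{\mathsf{L}^j_q}}\subsetneq{\vdash_L}\subsetneq{\vDash_{\mathsf{CPL}}}$.
   Context: $\mathbf{ŁV}_{n+1}=(\{0,\frac1n,\dots,1\},\neg,\to)$ with $\neg x=1-x$, $x\to y=\min\{1,1-x+y\}$. $F_{j/q}=\{x:x\ge j/q\}$; $\mathsf{L}^j_q=\langle\mathbf{ŁV}_{q+1},F_{j/q}\rangle$; $\bar{\mathsf{L}}^j_q=\langle\mathbf{ŁV}_{q+1}\times\mathbf{ŁV}_2,F_{j/q}\times\{1\}\rangle$; $\mathsf{CPL}=\langle\mathbf{ŁV}_2,\{1\}\rangle$. Matrix consequence: every evaluation sending the premises into the designated set sends the conclusion into it. $L_1$ is strongly maximal w.r.t. $L_2$ if ${\vdash_{L_1}}\subsetneq{\vdash_{L_2}}$ and adding to $L_1$ (as a structural rule, closed under substitution) any finitary rule valid in $L_2$ but not in $L_1$ yields exactly $L_2$. *)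

theory Defs
  imports Complex_Main "HOL-Computational_Algebra.Primes"
begin

datatype fm = Var nat | Neg fm | Imp fm fm

fun subst :: "(nat \<Rightarrow> fm) \<Rightarrow> fm \<Rightarrow> fm" where
  "subst \<sigma> (Var n) = \<sigma> n"
| "subst \<sigma> (Neg a) = Neg (subst \<sigma> a)"
| "subst \<sigma> (Imp a b) = Imp (subst \<sigma> a) (subst \<sigma> b)"

type_synonym logic = "fm set \<Rightarrow> fm \<Rightarrow> bool"

definition consequence_relation :: "logic \<Rightarrow> bool" where
  "consequence_relation L \<longleftrightarrow>
     (\<forall>\<Gamma> \<phi>. \<phi> \<in> \<Gamma> \<longrightarrow> L \<Gamma> \<phi>) \<and>
     (\<forall>\<Gamma> \<Delta> \<phi>. L \<Gamma> \<phi> \<and> \<Gamma> \<subseteq> \<Delta> \<longrightarrow> L \<Delta> \<phi>) \<and>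
     (\<forall>\<Gamma> \<Delta> \<phi>. (\<forall>\<psi>\<in>\<Delta>. L \<Gamma> \<psi>) \<and> L \<Delta> \<phi> \<longrightarrow> L \<Gamma> \<phi>)"

definition structural :: "logic \<Rightarrow> bool" where
  "structural L \<longleftrightarrow> (\<forall>\<sigma> \<Gamma> \<phi>. L \<Gamma> \<phi> \<longrightarrow> L (subst \<sigma> ` \<Gamma>) (subst \<sigma> \<phi>))"

definition finitary :: "logic \<Rightarrow> bool" where
  "finitary L \<longleftrightarrow> (\<forall>\<Gamma> \<phi>. L \<Gamma> \<phi> \<longrightarrow> (\<exists>\<Gamma>0. \<Gamma>0 \<subseteq> \<Gamma> \<and> finite \<Gamma>0 \<and> L \<Gamma>0 \<phi>))"

definition finitary_structural_logic :: "logic \<Rightarrow> bool" where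
  "finitary_structural_logic L \<longleftrightarrow> consequence_relation L \<and> structural L \<and> finitary L"

definition weaker_eq :: "logic \<Rightarrow> logic \<Rightarrow> bool" where
  "weaker_eq L1 L2 \<longleftrightarrow> (\<forall>\<Gamma> \<phi>. L1 \<Gamma> \<phi> \<longrightarrow> L2 \<Gamma> \<phi>)"

definition strictly_weaker :: "logic \<Rightarrow> logic \<Rightarrow> bool" where
  "strictly_weaker L1 L2 \<longleftrightarrow> weaker_eq L1 L2 \<and> L1 \<noteq> L2"

definition extend_by_rule :: "logic \<Rightarrow> fm set \<Rightarrow> fm \<Rightarrow> logic" where
  "extend_by_rule L \<Gamma> \<phi> = (\<lambda>\<Delta> \<psi>. \<forall>L'. consequence_relation L' \<and> structural L' \<and>
       weaker_eq L L' \<and> L' \<Gamma> \<phi> \<longrightarrow> L' \<Delta> \<psi>)"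

definition strongly_maximal :: "logic \<Rightarrow> logic \<Rightarrow> bool" where
  "strongly_maximal L1 L2 \<longleftrightarrow> strictly_weaker L1 L2 \<and>
     (\<forall>\<Gamma> \<phi>. finite \<Gamma> \<and> L2 \<Gamma> \<phi> \<and> \<not> L1 \<Gamma> \<phi> \<longrightarrow> extend_by_rule L1 \<Gamma> \<phi> = L2)"

fun eval :: "('v \<Rightarrow> 'v) \<Rightarrow> ('v \<Rightarrow> 'v \<Rightarrow> 'v) \<Rightarrow> (nat \<Rightarrow> 'v) \<Rightarrow> fm \<Rightarrow> 'v" where
  "eval ng im e (Var n) = e n"
| "eval ng im e (Neg a) = ng (eval ng im e a)"
| "eval ng im e (Imp a b) = im (eval ng im e a) (eval ng im e b)"

definition matrix_conseq :: "'v set \<Rightarrow> ('v \<Rightarrow> 'v) \<Rightarrow> ('v \<Rightarrow> 'v \<Rightarrow> 'v) \<Rightarrow> 'v set \<Rightarrow> logic" where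
  "matrix_conseq A ng im D = (\<lambda>\<Gamma> \<phi>. \<forall>e. (\<forall>n. e n \<in> A) \<longrightarrow>
       (\<forall>\<psi>\<in>\<Gamma>. eval ng im e \<psi> \<in> D) \<longrightarrow> eval ng im e \<phi> \<in> D)"

text \<open>Lukasiewicz algebra LV_{n+1} = ({0,1/n,...,1}, neg, imp).\<close>
definition LV :: "nat \<Rightarrow> rat set" where
  "LV n = {of_nat k / of_nat n | k. k \<le> n}"

definition lneg :: "rat \<Rightarrow> rat" where
  "lneg x = 1 - x"

definition limp :: "rat \<Rightarrow> rat \<Rightarrow> rat" where
  "limp x y = min 1 (1 - x + y)"

definition Fil :: "nat \<Rightarrow> nat \<Rightarrow> rat set" where
  "Fil j q = {x. x \<ge> of_nat j / of_nat q}"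

definition Lq :: "nat \<Rightarrow> nat \<Rightarrow> logic" where
  "Lq j q = matrix_conseq (LV q) lneg limp (LV q \<inter> Fil j q)"

definition Lqbar :: "nat \<Rightarrow> nat \<Rightarrow> logic" where
  "Lqbar j q = matrix_conseq (LV q \<times> LV 1)
     (\<lambda>(x, y). (lneg x, lneg y))
     (\<lambda>(x, y) (x', y'). (limp x x', limp y y'))
     ((LV q \<inter> Fil j q) \<times> {1})"

definition CPL :: logic where
  "CPL = matrix_conseq (LV 1) lneg limp {1}"

end

theory Submission
  imports Defs
begin


fun vars :: "fm \<Rightarrow> nat set" where
  "vars (Var n) = {n}"
| "vars (Neg a) = vars a"
| "vars (Imp a b) = vars a \<union> vars b"

lemma finite_vars: "finite (vars a)"
  by (induction a) auto

lemma eval_cong: "(\<And>n. n \<in> vars a \<Longrightarrow> e n = e' n) \<Longrightarrow> eval ng im e a = eval ng im e' a"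
  by (induction a) auto

lemma eval_subst: "eval ng im e (subst \<sigma> a) = eval ng im (\<lambda>n. eval ng im e (\<sigma> n)) a"
  by (induction a) auto

lemma eval_in:
  assumes "\<forall>x\<in>A. ng x \<in> A" "\<forall>x\<in>A. \<forall>y\<in>A. im x y \<in> A" "\<forall>n. e n \<in> A"
  shows "eval ng im e a \<in> A"
  using assms by (induction a) auto

lemma matrix_cr: "consequence_relation (matrix_conseq A ng im D)"
  unfolding consequence_relation_def matrix_conseq_def by blast

lemma matrix_structural:
  assumes "\<forall>x\<in>A. ng x \<in> A" "\<forall>x\<in>A. \<forall>y\<in>A. im x y \<in> A"
  shows "structural (matrix_conseq A ng im D)"
  unfolding structural_def matrix_conseq_def
proof (intro allI impI)
  fix \<sigma> \<Gamma> \<phi> e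
  assume h: "\<forall>e. (\<forall>n. e n \<in> A) \<longrightarrow> (\<forall>\<psi>\<in>\<Gamma>. eval ng im e \<psi> \<in> D) \<longrightarrow> eval ng im e \<phi> \<in> D"
    and e: "\<forall>n. e n \<in> A" and g: "\<forall>\<psi>\<in>subst \<sigma> ` \<Gamma>. eval ng im e \<psi> \<in> D"
  let ?e = "\<lambda>n. eval ng im e (\<sigma> n)"
  have "\<forall>n. ?e n \<in> A" using eval_in[OF assms e] by blast
  moreover have "\<forall>\<psi>\<in>\<Gamma>. eval ng im ?e \<psi> \<in> D" using g by (simp add: eval_subst)
  ultimately have "eval ng im ?e \<phi> \<in> D" using h[rule_format, of ?e] by blast
  then show "eval ng im e (subst \<sigma> \<phi>) \<in> D" by (simp add: eval_subst)
qed

section \<open>Compactness\<close>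

context
  fixes A :: "'v set" and ng :: "'v \<Rightarrow> 'v" and im :: "'v \<Rightarrow> 'v \<Rightarrow> 'v" and D :: "'v set" and \<Gamma> :: "fm set" and \<phi> :: fm
begin

definition cm :: "(nat \<Rightarrow> 'v) \<Rightarrow> nat \<Rightarrow> fm set \<Rightarrow> bool" where
  "cm s n G \<longleftrightarrow> (\<exists>e. (\<forall>k. e k \<in> A) \<and> (\<forall>k<n. e k = s k) \<and>
       (\<forall>\<psi>\<in>G. eval ng im e \<psi> \<in> D) \<and> eval ng im e \<phi> \<notin> D)"

definition good :: "(nat \<Rightarrow> 'v) \<Rightarrow> nat \<Rightarrow> bool" where
  "good s n \<longleftrightarrow> (\<forall>G. G \<subseteq> \<Gamma> \<and> finite G \<longrightarrow> cm s n G)"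

lemma good_step:
  assumes fin: "finite A" and g: "good s n"
  shows "\<exists>a\<in>A. good (s(n:=a)) (Suc n)"
proof (rule ccontr)
  assume "\<not> ?thesis"
  then have "\<forall>a\<in>A. \<exists>G. G \<subseteq> \<Gamma> \<and> finite G \<and> \<not> cm (s(n:=a)) (Suc n) G"
    unfolding good_def by blast
  then have "\<exists>Gf. \<forall>a\<in>A. Gf a \<subseteq> \<Gamma> \<and> finite (Gf a) \<and> \<not> cm (s(n:=a)) (Suc n) (Gf a)"
    by (rule bchoice)
  then obtain Gf where Gf: "\<forall>a\<in>A. Gf a \<subseteq> \<Gamma> \<and> finite (Gf a) \<and> \<not> cm (s(n:=a)) (Suc n) (Gf a)"
    by (elim exE)
  let ?U = "\<Union>a\<in>A. Gf a"
  have "?U \<subseteq> \<Gamma>" "finite ?U" using Gf fin by auto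
  then have "cm s n ?U" using g unfolding good_def by blast
  then obtain e where e: "\<forall>k. e k \<in> A" "\<forall>k<n. e k = s k" "\<forall>\<psi>\<in>?U. eval ng im e \<psi> \<in> D" "eval ng im e \<phi> \<notin> D"
    unfolding cm_def by blast
  have a: "e n \<in> A" using e by blast
  have "\<forall>k<Suc n. e k = (s(n:=e n)) k" using e(2) by (auto simp: less_Suc_eq)
  moreover have "\<forall>\<psi>\<in>Gf (e n). eval ng im e \<psi> \<in> D" using e(3) a by blast
  ultimately have "cm (s(n:=e n)) (Suc n) (Gf (e n))" unfolding cm_def using e(1,4) by blast
  then show False using Gf a by blast
qed

primrec seq :: "nat \<Rightarrow> nat \<Rightarrow> 'v" where
  "seq 0 = (\<lambda>_. undefined)"
| "seq (Suc n) = (seq n)(n := (SOME a. a \<in> A \<and> good ((seq n)(n:=a)) (Suc n)))"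

lemma seq_good:
  assumes fin: "finite A" and g0: "good (\<lambda>_. undefined) 0"
  shows "good (seq n) n"
proof (induction n)
  case 0 then show ?case using g0 by simp
next
  case (Suc n)
  from good_step[OF fin Suc] have "\<exists>a. a \<in> A \<and> good ((seq n)(n:=a)) (Suc n)" by blast
  then have "(SOME a. a \<in> A \<and> good ((seq n)(n:=a)) (Suc n)) \<in> A \<and> good ((seq n)(n:=(SOME a. a \<in> A \<and> good ((seq n)(n:=a)) (Suc n)))) (Suc n)"
    by (rule someI_ex)
  then show ?case by (simp only: seq.simps)
qed

lemma seq_in:
  assumes fin: "finite A" and g0: "good (\<lambda>_. undefined) 0"
  shows "seq (Suc n) n \<in> A"
proof -
  from good_step[OF fin seq_good[OF fin g0]] have "\<exists>a. a \<in> A \<and> good ((seq n)(n:=a)) (Suc n)" by blast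
  then have "(SOME a. a \<in> A \<and> good ((seq n)(n:=a)) (Suc n)) \<in> A \<and> good ((seq n)(n:=(SOME a. a \<in> A \<and> good ((seq n)(n:=a)) (Suc n)))) (Suc n)"
    by (rule someI_ex)
  then show ?thesis by (simp only: seq.simps fun_upd_same)
qed

lemma seq_stable: "k < m \<Longrightarrow> seq m k = seq (Suc k) k"
proof (induction m)
  case 0 then show ?case by simp
next
  case (Suc m)
  show ?case
  proof (cases "k = m")
    case True then show ?thesis by simp
  next
    case False
    then have "k < m" using Suc.prems by simp
    then have "seq m k = seq (Suc k) k" by (rule Suc.IH)
    moreover have "seq (Suc m) k = seq m k" using False by (simp only: seq.simps(2) fun_upd_other not_False_eq_True)
    ultimately show ?thesis by simp
  qed
qed

end

declare seq.simps[simp del]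

lemma matrix_finitary:
  assumes fin: "finite A"
  shows "finitary (matrix_conseq A ng im D)"
  unfolding finitary_def
proof (intro allI impI, rule ccontr)
  fix \<Gamma> \<phi>
  assume L: "matrix_conseq A ng im D \<Gamma> \<phi>"
    and nf: "\<not> (\<exists>\<Gamma>0\<subseteq>\<Gamma>. finite \<Gamma>0 \<and> matrix_conseq A ng im D \<Gamma>0 \<phi>)"
  have g0: "good A ng im D \<Gamma> \<phi> (\<lambda>_. undefined) 0"
    unfolding good_def
  proof (intro allI impI)
    fix G assume G: "G \<subseteq> \<Gamma> \<and> finite G"
    then have "\<not> matrix_conseq A ng im D G \<phi>" using nf by blast
    then show "cm A ng im D \<phi> (\<lambda>_. undefined) 0 G"
      unfolding matrix_conseq_def cm_def by auto
  qed
  let ?s = "seq A ng im D \<Gamma> \<phi>"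
  define e where "e = (\<lambda>k. ?s (Suc k) k)"
  have eA: "\<forall>k. e k \<in> A" unfolding e_def using seq_in[OF fin g0] by (simp del: seq.simps)
  have agree: "\<exists>e'. (\<forall>k. e' k \<in> A) \<and> (\<forall>k\<in>vars \<chi>. e' k = e k) \<and> (\<forall>\<psi>\<in>G. eval ng im e' \<psi> \<in> D) \<and> eval ng im e' \<phi> \<notin> D"
    if GG: "G \<subseteq> \<Gamma>" "finite G" for G \<chi>
  proof -
    obtain N where N: "\<forall>k\<in>vars \<chi>. k < N" using finite_vars[of \<chi>] finite_nat_set_iff_bounded by auto
    have gN: "good A ng im D \<Gamma> \<phi> (?s N) N" by (rule seq_good[OF fin g0])
    obtain e' where e': "\<forall>k. e' k \<in> A" "\<forall>k<N. e' k = ?s N k" "\<forall>\<psi>\<in>G. eval ng im e' \<psi> \<in> D" "eval ng im e' \<phi> \<notin> D"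
      using gN[unfolded good_def, rule_format, OF conjI[OF GG], unfolded cm_def] by blast
    have "\<forall>k\<in>vars \<chi>. e' k = e k"
    proof
      fix k assume "k \<in> vars \<chi>"
      then have "k < N" using N by blast
      then have "e' k = ?s N k" "?s N k = ?s (Suc k) k" using e'(2) seq_stable by blast+
      then show "e' k = e k" unfolding e_def by simp
    qed
    then show ?thesis using e' by blast
  qed
  have S: "\<forall>\<psi>\<in>\<Gamma>. eval ng im e \<psi> \<in> D"
  proof
    fix \<psi> assume "\<psi> \<in> \<Gamma>"
    then obtain e' where "\<forall>k\<in>vars \<psi>. e' k = e k" "eval ng im e' \<psi> \<in> D"
      using agree[of "{\<psi>}" \<psi>] by auto
    then show "eval ng im e \<psi> \<in> D" using eval_cong[of \<psi> e' e] by auto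
  qed
  have Nd: "eval ng im e \<phi> \<notin> D"
  proof -
    obtain e' where "\<forall>k\<in>vars \<phi>. e' k = e k" "eval ng im e' \<phi> \<notin> D"
      using agree[of "{}" \<phi>] by auto
    then show ?thesis using eval_cong[of \<phi> e' e] by auto
  qed
  from L have LL: "\<forall>e. (\<forall>n. e n \<in> A) \<longrightarrow> (\<forall>\<psi>\<in>\<Gamma>. eval ng im e \<psi> \<in> D) \<longrightarrow> eval ng im e \<phi> \<in> D"
    by (simp add: matrix_conseq_def)
  from LL have I: "(\<forall>n. e n \<in> A) \<longrightarrow> (\<forall>\<psi>\<in>\<Gamma>. eval ng im e \<psi> \<in> D) \<longrightarrow> eval ng im e \<phi> \<in> D"
    by (rule spec)
  from mp[OF mp[OF I eA] S] Nd show False by contradiction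
qed



fun evalN :: "nat \<Rightarrow> (nat \<Rightarrow> nat) \<Rightarrow> fm \<Rightarrow> nat" where
  "evalN Q e (Var n) = e n"
| "evalN Q e (Neg a) = Q - evalN Q e a"
| "evalN Q e (Imp a b) = min Q (Q - evalN Q e a + evalN Q e b)"

definition bnd :: "nat \<Rightarrow> (nat \<Rightarrow> nat) \<Rightarrow> bool" where
  "bnd Q e \<longleftrightarrow> (\<forall>n. e n \<le> Q)"

lemma evalN_bnd: "bnd Q e \<Longrightarrow> evalN Q e a \<le> Q"
  by (induction a) (auto simp: bnd_def)

lemma evalN_cong: "(\<And>n. n \<in> vars a \<Longrightarrow> e n = e' n) \<Longrightarrow> evalN Q e a = evalN Q e' a"
  by (induction a) auto

lemma evalN_subst: "evalN Q e (subst \<sigma> a) = evalN Q (\<lambda>n. evalN Q e (\<sigma> n)) a"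
  by (induction a) auto

definition LN :: "nat \<Rightarrow> nat \<Rightarrow> logic" where
  "LN Q J \<Gamma> \<phi> \<longleftrightarrow> (\<forall>e. bnd Q e \<longrightarrow> (\<forall>\<psi>\<in>\<Gamma>. J \<le> evalN Q e \<psi>) \<longrightarrow> J \<le> evalN Q e \<phi>)"

lemma eval_LV:
  assumes "0 < Q" "bnd Q e"
  shows "eval lneg limp (\<lambda>n. of_nat (e n) / of_nat Q) a = of_nat (evalN Q e a) / of_nat Q"
proof (induction a)
  case (Var n) then show ?case by simp
next
  case (Neg a)
  have le: "evalN Q e a \<le> Q" using evalN_bnd[OF assms(2)] .
  show ?case using Neg le assms(1) by (simp add: lneg_def of_nat_diff field_simps)
next
  case (Imp a b)
  have le: "evalN Q e a \<le> Q" "evalN Q e b \<le> Q" using evalN_bnd[OF assms(2)] by auto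
  have q: "(of_nat Q :: rat) > 0" using assms(1) by simp
  have "limp (of_nat (evalN Q e a) / of_nat Q) (of_nat (evalN Q e b) / of_nat Q)
        = of_nat (min Q (Q - evalN Q e a + evalN Q e b)) / (of_nat Q :: rat)"
  proof -
    have "1 - of_nat (evalN Q e a) / of_nat Q + of_nat (evalN Q e b) / of_nat Q
          = (of_nat (Q - evalN Q e a + evalN Q e b) :: rat) / of_nat Q"
      using le q by (simp add: of_nat_diff field_simps)
    moreover have "min 1 ((of_nat (Q - evalN Q e a + evalN Q e b) :: rat) / of_nat Q)
          = of_nat (min Q (Q - evalN Q e a + evalN Q e b)) / of_nat Q"
      using q by (auto simp: min_def field_simps)
    ultimately show ?thesis by (simp add: limp_def)
  qed
  then show ?case using Imp by simp
qed

lemma LV_char: "x \<in> LV Q \<longleftrightarrow> (\<exists>k\<le>Q. x = of_nat k / of_nat Q)"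
  unfolding LV_def by auto

lemma LV_val:
  assumes "\<forall>n. e n \<in> LV Q"
  obtains k where "bnd Q k" "e = (\<lambda>n. of_nat (k n) / of_nat Q)"
proof -
  have "\<forall>n. \<exists>k. k \<le> Q \<and> e n = of_nat k / of_nat Q" using assms LV_char by blast
  then obtain k where "\<forall>n. k n \<le> Q \<and> e n = of_nat (k n) / of_nat Q" by metis
  then show ?thesis using that[of k] by (auto simp: bnd_def)
qed

lemma LV_finite: "finite (LV Q)"
proof -
  have "LV Q = (\<lambda>k. of_nat k / of_nat Q) ` {..Q}" unfolding LV_def by auto
  then show ?thesis by simp
qed

lemma div_le_iff: "0 < Q \<Longrightarrow> ((of_nat a :: rat) / of_nat Q \<le> of_nat b / of_nat Q) \<longleftrightarrow> a \<le> b"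
  by (simp add: divide_le_cancel)

lemma matrix_LN:
  assumes Q: "0 < Q" and DD: "\<And>k. k \<le> Q \<Longrightarrow> (of_nat k / of_nat Q \<in> D \<longleftrightarrow> J \<le> k)"
  shows "matrix_conseq (LV Q) lneg limp D = LN Q J"
proof (intro ext)
  fix \<Gamma> \<phi>
  have key: "eval lneg limp (\<lambda>n. of_nat (k n) / of_nat Q) a \<in> D \<longleftrightarrow> J \<le> evalN Q k a" if "bnd Q k" for k a
    using eval_LV[OF Q that] DD[OF evalN_bnd[OF that]] by simp
  show "matrix_conseq (LV Q) lneg limp D \<Gamma> \<phi> = LN Q J \<Gamma> \<phi>"
  proof
    assume h: "matrix_conseq (LV Q) lneg limp D \<Gamma> \<phi>"
    show "LN Q J \<Gamma> \<phi>" unfolding LN_def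
    proof (intro allI impI)
      fix k assume k: "bnd Q k" and g: "\<forall>\<psi>\<in>\<Gamma>. J \<le> evalN Q k \<psi>"
      have A1: "\<forall>n. of_nat (k n) / of_nat Q \<in> LV Q" using k unfolding bnd_def LV_char by blast
      have A2: "\<forall>\<psi>\<in>\<Gamma>. eval lneg limp (\<lambda>n. of_nat (k n) / of_nat Q) \<psi> \<in> D" using g key[OF k] by blast
      from h have "(\<forall>n. of_nat (k n) / of_nat Q \<in> LV Q) \<longrightarrow> (\<forall>\<psi>\<in>\<Gamma>. eval lneg limp (\<lambda>n. of_nat (k n) / of_nat Q) \<psi> \<in> D)
         \<longrightarrow> eval lneg limp (\<lambda>n. of_nat (k n) / of_nat Q) \<phi> \<in> D"
        unfolding matrix_conseq_def by (rule spec)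
      then have "eval lneg limp (\<lambda>n. of_nat (k n) / of_nat Q) \<phi> \<in> D" using A1 A2 by blast
      then show "J \<le> evalN Q k \<phi>" using key[OF k] by blast
    qed
  next
    assume h: "LN Q J \<Gamma> \<phi>"
    show "matrix_conseq (LV Q) lneg limp D \<Gamma> \<phi>" unfolding matrix_conseq_def
    proof (intro allI impI)
      fix e assume e: "\<forall>n. e n \<in> LV Q" and g: "\<forall>\<psi>\<in>\<Gamma>. eval lneg limp e \<psi> \<in> D"
      obtain k where k: "bnd Q k" "e = (\<lambda>n. of_nat (k n) / of_nat Q)" using LV_val[OF e] by blast
      have "\<forall>\<psi>\<in>\<Gamma>. J \<le> evalN Q k \<psi>" using g key[OF k(1)] k(2) by blast
      then have "J \<le> evalN Q k \<phi>" using h k(1) unfolding LN_def by blast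
      then show "eval lneg limp e \<phi> \<in> D" using key[OF k(1)] k(2) by blast
    qed
  qed
qed

lemma Lq_LN: assumes "0 < q" shows "Lq j q = LN q j"
  unfolding Lq_def
  by (rule matrix_LN[OF assms]) (auto simp: Fil_def LV_char div_le_iff[OF assms])

lemma CPL_LN: "CPL = LN 1 1"
  unfolding CPL_def by (rule matrix_LN) auto



lemma eval_pair:
  "eval (\<lambda>(x, y). (lneg x, lneg y)) (\<lambda>(x, y) (x', y'). (limp x x', limp y y')) e a
   = (eval lneg limp (fst \<circ> e) a, eval lneg limp (snd \<circ> e) a)"
  by (induction a) (auto split: prod.splits)

definition LB :: "nat \<Rightarrow> nat \<Rightarrow> logic" where
  "LB q j \<Gamma> \<phi> \<longleftrightarrow> (\<forall>e1 e2. bnd q e1 \<longrightarrow> bnd 1 e2 \<longrightarrow>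
      (\<forall>\<psi>\<in>\<Gamma>. j \<le> evalN q e1 \<psi> \<and> 1 \<le> evalN 1 e2 \<psi>) \<longrightarrow> j \<le> evalN q e1 \<phi> \<and> 1 \<le> evalN 1 e2 \<phi>)"

lemma LV_neg: "0 < Q \<Longrightarrow> x \<in> LV Q \<Longrightarrow> lneg x \<in> LV Q"
proof -
  assume Q: "0 < Q" and x: "x \<in> LV Q"
  then obtain k where k: "k \<le> Q" "x = of_nat k / of_nat Q" using LV_char by blast
  have b: "bnd Q (\<lambda>_. k)" using k by (simp add: bnd_def)
  have "lneg x = eval lneg limp (\<lambda>n. of_nat ((\<lambda>_. k) n) / of_nat Q) (Neg (Var 0))" using k by simp
  also have "\<dots> = of_nat (evalN Q (\<lambda>_. k) (Neg (Var 0))) / of_nat Q" by (rule eval_LV[OF Q b])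
  finally show ?thesis using evalN_bnd[OF b, of "Neg (Var 0)"] LV_char by blast
qed

lemma LV_imp: "0 < Q \<Longrightarrow> x \<in> LV Q \<Longrightarrow> y \<in> LV Q \<Longrightarrow> limp x y \<in> LV Q"
proof -
  assume Q: "0 < Q" and x: "x \<in> LV Q" and y: "y \<in> LV Q"
  then obtain k l where k: "k \<le> Q" "x = of_nat k / of_nat Q" "l \<le> Q" "y = of_nat l / of_nat Q" using LV_char by metis
  let ?e = "\<lambda>n. if n = 0 then k else l"
  have b: "bnd Q ?e" using k by (simp add: bnd_def)
  have "limp x y = eval lneg limp (\<lambda>n. of_nat (?e n) / of_nat Q) (Imp (Var 0) (Var 1))" using k by simp
  also have "\<dots> = of_nat (evalN Q ?e (Imp (Var 0) (Var 1))) / of_nat Q" by (rule eval_LV[OF Q b])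
  finally show ?thesis using evalN_bnd[OF b, of "Imp (Var 0) (Var 1)"] LV_char by blast
qed

lemma pair_key:
  assumes q: "0 < q" and k1: "bnd q k1" and k2: "bnd 1 k2"
  shows "eval (\<lambda>(x, y). (lneg x, lneg y)) (\<lambda>(x, y) (x', y'). (limp x x', limp y y'))
            (\<lambda>n. (of_nat (k1 n) / of_nat q, of_nat (k2 n) / of_nat 1)) a \<in> (LV q \<inter> Fil j q) \<times> {1}
         \<longleftrightarrow> j \<le> evalN q k1 a \<and> 1 \<le> evalN 1 k2 a"
proof -
  have f: "fst \<circ> (\<lambda>n. (of_nat (k1 n) / of_nat q, of_nat (k2 n) / of_nat 1)) = (\<lambda>n. of_nat (k1 n) / (of_nat q :: rat))"
    by auto
  have s: "snd \<circ> (\<lambda>n. (of_nat (k1 n) / of_nat q, of_nat (k2 n) / of_nat 1)) = (\<lambda>n. of_nat (k2 n) / (of_nat 1 :: rat))"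
    by auto
  have le1: "evalN q k1 a \<le> q" "evalN 1 k2 a \<le> 1" using evalN_bnd k1 k2 by auto
  show ?thesis
    unfolding eval_pair f s eval_LV[OF q k1] eval_LV[OF zero_less_one k2]
    using le1 by (auto simp: LV_char Fil_def div_le_iff[OF q])
qed

lemma Lqbar_LB: assumes q: "0 < q" shows "Lqbar j q = LB q j"
proof (intro ext)
  fix \<Gamma> \<phi>
  show "Lqbar j q \<Gamma> \<phi> = LB q j \<Gamma> \<phi>"
  proof
    assume h: "Lqbar j q \<Gamma> \<phi>"
    show "LB q j \<Gamma> \<phi>" unfolding LB_def
    proof (intro allI impI)
      fix k1 k2 assume k1: "bnd q k1" and k2: "bnd 1 k2" and g: "\<forall>\<psi>\<in>\<Gamma>. j \<le> evalN q k1 \<psi> \<and> 1 \<le> evalN 1 k2 \<psi>"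
      let ?e = "\<lambda>n. (of_nat (k1 n) / of_nat q, of_nat (k2 n) / of_nat 1) :: rat \<times> rat"
      have A1: "\<forall>n. ?e n \<in> LV q \<times> LV 1"
      proof
        fix n
        have "k1 n \<le> q" "k2 n \<le> 1" using k1 k2 unfolding bnd_def by auto
        then have "of_nat (k1 n) / of_nat q \<in> LV q" "of_nat (k2 n) / of_nat 1 \<in> LV 1"
          unfolding LV_char by blast+
        then show "?e n \<in> LV q \<times> LV 1" by simp
      qed
      have A2: "\<forall>\<psi>\<in>\<Gamma>. eval (\<lambda>(x, y). (lneg x, lneg y)) (\<lambda>(x, y) (x', y'). (limp x x', limp y y')) ?e \<psi> \<in> (LV q \<inter> Fil j q) \<times> {1}"
        using g pair_key[OF q k1 k2] by blast
      from h have IMP: "(\<forall>n. ?e n \<in> LV q \<times> LV 1) \<longrightarrow> (\<forall>\<psi>\<in>\<Gamma>. eval (\<lambda>(x, y). (lneg x, lneg y)) (\<lambda>(x, y) (x', y'). (limp x x', limp y y')) ?e \<psi> \<in> (LV q \<inter> Fil j q) \<times> {1})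
          \<longrightarrow> eval (\<lambda>(x, y). (lneg x, lneg y)) (\<lambda>(x, y) (x', y'). (limp x x', limp y y')) ?e \<phi> \<in> (LV q \<inter> Fil j q) \<times> {1}"
        unfolding Lqbar_def matrix_conseq_def by (rule spec)
      have "eval (\<lambda>(x, y). (lneg x, lneg y)) (\<lambda>(x, y) (x', y'). (limp x x', limp y y')) ?e \<phi> \<in> (LV q \<inter> Fil j q) \<times> {1}"
        using mp[OF mp[OF IMP A1] A2] .
      then show "j \<le> evalN q k1 \<phi> \<and> 1 \<le> evalN 1 k2 \<phi>" by (rule iffD1[OF pair_key[OF q k1 k2]])
    qed
  next
    assume h: "LB q j \<Gamma> \<phi>"
    show "Lqbar j q \<Gamma> \<phi>" unfolding Lqbar_def matrix_conseq_def
    proof (intro allI impI)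
      fix e :: "nat \<Rightarrow> rat \<times> rat"
      assume e: "\<forall>n. e n \<in> LV q \<times> LV 1"
        and g: "\<forall>\<psi>\<in>\<Gamma>. eval (\<lambda>(x, y). (lneg x, lneg y)) (\<lambda>(x, y) (x', y'). (limp x x', limp y y')) e \<psi> \<in> (LV q \<inter> Fil j q) \<times> {1}"
      have "\<forall>n. (fst \<circ> e) n \<in> LV q" "\<forall>n. (snd \<circ> e) n \<in> LV 1" using e by (auto simp: mem_Times_iff)
      then obtain k1 k2 where k1: "bnd q k1" "fst \<circ> e = (\<lambda>n. of_nat (k1 n) / of_nat q)"
        and k2: "bnd 1 k2" "snd \<circ> e = (\<lambda>n. of_nat (k2 n) / of_nat 1)"
        by (metis LV_val)
      have ee: "e = (\<lambda>n. (of_nat (k1 n) / of_nat q, of_nat (k2 n) / of_nat 1))"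
        using k1(2) k2(2) by (auto simp: fun_eq_iff prod_eq_iff)
      have "\<forall>\<psi>\<in>\<Gamma>. j \<le> evalN q k1 \<psi> \<and> 1 \<le> evalN 1 k2 \<psi>" using g pair_key[OF q k1(1) k2(1)] ee by blast
      then have "j \<le> evalN q k1 \<phi> \<and> 1 \<le> evalN 1 k2 \<phi>" using h k1(1) k2(1) unfolding LB_def by blast
      then show "eval (\<lambda>(x, y). (lneg x, lneg y)) (\<lambda>(x, y) (x', y'). (limp x x', limp y y')) e \<phi> \<in> (LV q \<inter> Fil j q) \<times> {1}"
        using pair_key[OF q k1(1) k2(1)] ee by blast
    qed
  qed
qed

lemma Lqbar_props:
  assumes q: "0 < q"
  shows "consequence_relation (Lqbar j q)" "structural (Lqbar j q)" "finitary (Lqbar j q)"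
proof -
  show "consequence_relation (Lqbar j q)" unfolding Lqbar_def by (rule matrix_cr)
  show "structural (Lqbar j q)" unfolding Lqbar_def
    by (rule matrix_structural) (auto simp: LV_neg LV_imp q)
  show "finitary (Lqbar j q)" unfolding Lqbar_def
    by (rule matrix_finitary) (simp add: LV_finite)
qed

lemma CPL_props:
  shows "consequence_relation CPL" "structural CPL" "finitary CPL"
proof -
  show "consequence_relation CPL" unfolding CPL_def by (rule matrix_cr)
  show "structural CPL" unfolding CPL_def
    by (rule matrix_structural) (auto simp: LV_neg LV_imp)
  show "finitary CPL" unfolding CPL_def
    by (rule matrix_finitary) (simp add: LV_finite)
qed

lemma Lq_props:
  assumes q: "0 < q"
  shows "consequence_relation (Lq j q)"
  unfolding Lq_def by (rule matrix_cr)

lemma evalN_embed: "bnd 1 e \<Longrightarrow> evalN q (\<lambda>n. q * e n) a = q * evalN 1 e a"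
proof (induction a)
  case (Var n) then show ?case by simp
next
  case (Neg a)
  have "evalN 1 e a \<le> 1" using evalN_bnd[OF Neg.prems] .
  then show ?case using Neg by (auto simp: diff_mult_distrib2 le_Suc_eq)
next
  case (Imp a b)
  have "evalN 1 e a \<le> 1" "evalN 1 e b \<le> 1" using evalN_bnd[OF Imp.prems] by auto
  then show ?case using Imp by (auto simp: le_Suc_eq)
qed

lemma LN_CPL:
  assumes j: "0 < j" "j \<le> q" and h: "LN q j \<Gamma> \<phi>"
  shows "LN 1 1 \<Gamma> \<phi>"
  unfolding LN_def
proof (intro allI impI)
  fix e assume e: "bnd 1 e" and g: "\<forall>\<psi>\<in>\<Gamma>. 1 \<le> evalN 1 e \<psi>"
  have b: "bnd q (\<lambda>n. q * e n)" using e j unfolding bnd_def by (auto simp: le_Suc_eq)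
  have "\<forall>\<psi>\<in>\<Gamma>. j \<le> evalN q (\<lambda>n. q * e n) \<psi>" using g j evalN_embed[OF e]
    by (metis mult.right_neutral mult_le_mono2 order_trans)
  then have "j \<le> evalN q (\<lambda>n. q * e n) \<phi>" using h b unfolding LN_def by blast
  then have "j \<le> q * evalN 1 e \<phi>" using evalN_embed[OF e] by simp
  then show "1 \<le> evalN 1 e \<phi>" using j by (cases "evalN 1 e \<phi>") auto
qed

definition csat :: "fm set \<Rightarrow> bool" where
  "csat \<Gamma> \<longleftrightarrow> (\<exists>e. bnd 1 e \<and> (\<forall>\<psi>\<in>\<Gamma>. 1 \<le> evalN 1 e \<psi>))"

lemma LB_alt:
  assumes j: "0 < j" "j \<le> q"
  shows "LB q j \<Gamma> \<phi> \<longleftrightarrow> LN q j \<Gamma> \<phi> \<or> \<not> csat \<Gamma>"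
proof
  assume h: "LB q j \<Gamma> \<phi>"
  show "LN q j \<Gamma> \<phi> \<or> \<not> csat \<Gamma>"
  proof (rule ccontr)
    assume "\<not> ?thesis"
    then obtain e2 where e2: "bnd 1 e2" "\<forall>\<psi>\<in>\<Gamma>. 1 \<le> evalN 1 e2 \<psi>" and n: "\<not> LN q j \<Gamma> \<phi>"
      unfolding csat_def by blast
    from n obtain e1 where e1: "bnd q e1" "\<forall>\<psi>\<in>\<Gamma>. j \<le> evalN q e1 \<psi>" "\<not> j \<le> evalN q e1 \<phi>"
      unfolding LN_def by blast
    show False using h e1 e2 unfolding LB_def by blast
  qed
next
  assume h: "LN q j \<Gamma> \<phi> \<or> \<not> csat \<Gamma>"
  show "LB q j \<Gamma> \<phi>" unfolding LB_def
  proof (intro allI impI)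
    fix e1 e2 assume e1: "bnd q e1" and e2: "bnd 1 e2" and g: "\<forall>\<psi>\<in>\<Gamma>. j \<le> evalN q e1 \<psi> \<and> 1 \<le> evalN 1 e2 \<psi>"
    have cs: "csat \<Gamma>" using e2 g unfolding csat_def by blast
    then have L: "LN q j \<Gamma> \<phi>" using h by blast
    then have "j \<le> evalN q e1 \<phi>" using e1 g unfolding LN_def by blast
    moreover have "1 \<le> evalN 1 e2 \<phi>" using LN_CPL[OF j L] e2 g unfolding LN_def by blast
    ultimately show "j \<le> evalN q e1 \<phi> \<and> 1 \<le> evalN 1 e2 \<phi>" by blast
  qed
qed



definition mrep :: "nat \<Rightarrow> ((nat \<Rightarrow> nat) \<Rightarrow> nat) \<Rightarrow> bool" where
  "mrep Q F \<longleftrightarrow> (\<exists>\<phi>. \<forall>e. bnd Q e \<longrightarrow> evalN Q e \<phi> = F e)"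

definition urep :: "nat \<Rightarrow> (nat \<Rightarrow> nat) \<Rightarrow> bool" where
  "urep Q g \<longleftrightarrow> mrep Q (\<lambda>e. g (e 0))"

lemma mrep_var: "mrep Q (\<lambda>e. e i)"
  unfolding mrep_def by (rule exI[of _ "Var i"]) simp

lemma mrep_neg: "mrep Q F \<Longrightarrow> mrep Q (\<lambda>e. Q - F e)"
  unfolding mrep_def by (metis evalN.simps(2))

lemma mrep_imp: "mrep Q F \<Longrightarrow> mrep Q G \<Longrightarrow> mrep Q (\<lambda>e. min Q (Q - F e + G e))"
proof -
  assume "mrep Q F" "mrep Q G"
  then obtain a b where a: "\<forall>e. bnd Q e \<longrightarrow> evalN Q e a = F e" and b: "\<forall>e. bnd Q e \<longrightarrow> evalN Q e b = G e"
    unfolding mrep_def by blast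
  show ?thesis unfolding mrep_def by (rule exI[of _ "Imp a b"]) (simp add: a b)
qed

lemma mrep_le: "mrep Q F \<Longrightarrow> bnd Q e \<Longrightarrow> F e \<le> Q"
  unfolding mrep_def using evalN_bnd by metis

lemma mrep_cong: "mrep Q F \<Longrightarrow> (\<And>e. bnd Q e \<Longrightarrow> F e = G e) \<Longrightarrow> mrep Q G"
  unfolding mrep_def by metis

lemma mrep_top: "mrep Q (\<lambda>e. Q)"
  using mrep_imp[OF mrep_var mrep_var, of Q 0 0] by (rule mrep_cong) simp

lemma mrep_bot: "mrep Q (\<lambda>e. 0)"
  using mrep_neg[OF mrep_top, of Q] by simp

lemma mrep_max: assumes "mrep Q F" "mrep Q G" shows "mrep Q (\<lambda>e. max (F e) (G e))"
proof (rule mrep_cong[OF mrep_imp[OF mrep_imp[OF assms] assms(2)]])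
  fix e assume e: "bnd Q e"
  have "F e \<le> Q" "G e \<le> Q" using mrep_le assms e by auto
  then show "min Q (Q - min Q (Q - F e + G e) + G e) = max (F e) (G e)" by auto
qed

lemma mrep_min: assumes "mrep Q F" "mrep Q G" shows "mrep Q (\<lambda>e. min (F e) (G e))"
proof (rule mrep_cong[OF mrep_neg[OF mrep_max[OF mrep_neg[OF assms(1)] mrep_neg[OF assms(2)]]]])
  fix e assume e: "bnd Q e"
  have "F e \<le> Q" "G e \<le> Q" using mrep_le assms e by auto
  then show "Q - max (Q - F e) (Q - G e) = min (F e) (G e)" by auto
qed

lemma mrep_oplus: assumes "mrep Q F" "mrep Q G" shows "mrep Q (\<lambda>e. min Q (F e + G e))"
proof (rule mrep_cong[OF mrep_imp[OF mrep_neg[OF assms(1)] assms(2)]])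
  fix e assume e: "bnd Q e"
  have "F e \<le> Q" using mrep_le assms e by auto
  then show "min Q (Q - (Q - F e) + G e) = min Q (F e + G e)" by auto
qed

lemma mrep_otimes: assumes "mrep Q F" "mrep Q G" shows "mrep Q (\<lambda>e. F e + G e - Q)"
proof (rule mrep_cong[OF mrep_neg[OF mrep_imp[OF assms(1) mrep_neg[OF assms(2)]]]])
  fix e assume e: "bnd Q e"
  have "F e \<le> Q" "G e \<le> Q" using mrep_le assms e by auto
  then show "Q - min Q (Q - F e + (Q - G e)) = F e + G e - Q" by auto
qed

lemma mrep_minus: assumes "mrep Q F" "mrep Q G" shows "mrep Q (\<lambda>e. F e - G e)"
proof (rule mrep_cong[OF mrep_neg[OF mrep_imp[OF assms]]])
  fix e assume e: "bnd Q e"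
  have "F e \<le> Q" "G e \<le> Q" using mrep_le assms e by auto
  then show "Q - min Q (Q - F e + G e) = F e - G e" by auto
qed

lemma mrep_smul: assumes "mrep Q F" shows "mrep Q (\<lambda>e. min Q (k * F e))"
proof (induction k)
  case 0 show ?case using mrep_bot by simp
next
  case (Suc k)
  show ?case
  proof (rule mrep_cong[OF mrep_oplus[OF Suc assms]])
    fix e show "min Q (min Q (k * F e) + F e) = min Q (Suc k * F e)" by auto
  qed
qed

lemma mrep_comp: assumes g: "urep Q g" and F: "mrep Q F" shows "mrep Q (\<lambda>e. g (F e))"
proof -
  obtain a where a: "\<forall>e. bnd Q e \<longrightarrow> evalN Q e a = g (e 0)" using g unfolding urep_def mrep_def by blast
  obtain b where b: "\<forall>e. bnd Q e \<longrightarrow> evalN Q e b = F e" using F unfolding mrep_def by blast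
  show ?thesis unfolding mrep_def
  proof (rule exI[of _ "subst (\<lambda>_. b) a"], intro allI impI)
    fix e assume e: "bnd Q e"
    have "bnd Q (\<lambda>n. evalN Q e b)" using evalN_bnd[OF e] by (simp add: bnd_def)
    then show "evalN Q e (subst (\<lambda>_. b) a) = g (F e)" using a b e by (simp add: evalN_subst)
  qed
qed

lemma urep_comp: assumes "urep Q g" "urep Q h" shows "urep Q (\<lambda>x. g (h x))"
  using mrep_comp[OF assms(1) assms(2)[unfolded urep_def]] unfolding urep_def by simp

lemma urep_on: "urep Q g \<Longrightarrow> mrep Q (\<lambda>e. g (e i))"
  unfolding urep_def by (rule mrep_comp[OF _ mrep_var]) (simp add: urep_def)

lemma urep_id: "urep Q (\<lambda>x. x)"
  unfolding urep_def by (rule mrep_var)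

lemma mrep_Max:
  assumes "finite I" "I \<noteq> {}" "\<forall>i\<in>I. mrep Q (F i)"
  shows "mrep Q (\<lambda>e. Max ((\<lambda>i. F i e) ` I))"
  using assms
proof (induction I rule: finite_ne_induct)
  case (singleton x) then show ?case by simp
next
  case (insert x I)
  have "mrep Q (\<lambda>e. max (F x e) (Max ((\<lambda>i. F i e) ` I)))"
    using insert by (intro mrep_max) auto
  then show ?case using insert by simp
qed

lemma mrep_Min:
  assumes "finite I" "I \<noteq> {}" "\<forall>i\<in>I. mrep Q (F i)"
  shows "mrep Q (\<lambda>e. Min ((\<lambda>i. F i e) ` I))"
  using assms
proof (induction I rule: finite_ne_induct)
  case (singleton x) then show ?case by simp
next
  case (insert x I)
  have "mrep Q (\<lambda>e. min (F x e) (Min ((\<lambda>i. F i e) ` I)))"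
    using insert by (intro mrep_min) auto
  then show ?case using insert by simp
qed

section \<open>Separation\<close>

lemma urep_double: "urep Q (\<lambda>x. min Q (x + x))"
  unfolding urep_def by (rule mrep_oplus[OF mrep_var mrep_var])

lemma urep_half: "urep Q (\<lambda>x. x + x - Q)"
  unfolding urep_def by (rule mrep_otimes[OF mrep_var mrep_var])

lemma sep_gt:
  "b < a \<Longrightarrow> a \<le> Q \<Longrightarrow> \<exists>g. urep Q g \<and> g a = Q \<and> g b < Q"
proof (induction "Q - (a - b)" arbitrary: a b rule: less_induct)
  case less
  show ?case
  proof (cases "a = Q")
    case True then show ?thesis using urep_id less.prems by auto
  next
    case aQ: False
    show ?thesis
    proof (cases "a + a \<le> Q")
      case True
      have "Q - ((a + a) - (b + b)) < Q - (a - b)" using True less.prems aQ by auto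
      then obtain g where g: "urep Q g" "g (a + a) = Q" "g (b + b) < Q"
        using less.hyps[of "a + a" "b + b"] less.prems True by auto
      have "urep Q (\<lambda>x. g (min Q (x + x)))" by (rule urep_comp[OF g(1) urep_double])
      then show ?thesis using g True less.prems by (intro exI[of _ "\<lambda>x. g (min Q (x + x))"]) auto
    next
      case F2: False
      show ?thesis
      proof (cases "b + b < Q")
        case True
        then show ?thesis using urep_double F2 by (intro exI[of _ "\<lambda>x. min Q (x + x)"]) auto
      next
        case False
        have "Q - ((a + a - Q) - (b + b - Q)) < Q - (a - b)" using False F2 less.prems aQ by auto
        moreover have "b + b - Q < a + a - Q" "a + a - Q \<le> Q" using False less.prems by auto
        ultimately obtain g where g: "urep Q g" "g (a + a - Q) = Q" "g (b + b - Q) < Q"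
          using less.hyps[of "a + a - Q" "b + b - Q"] by auto
        have "urep Q (\<lambda>x. g (x + x - Q))" by (rule urep_comp[OF g(1) urep_half])
        then show ?thesis using g by (intro exI[of _ "\<lambda>x. g (x + x - Q)"]) auto
      qed
    qed
  qed
qed

lemma sep_gt2:
  assumes "b < a" "a \<le> Q"
  shows "\<exists>g. urep Q g \<and> g a = Q \<and> g b = 0"
proof -
  obtain g where g: "urep Q g" "g a = Q" "g b < Q" using sep_gt[OF assms] by blast
  have "urep Q (\<lambda>x. Q - min Q (Q * (Q - g x)))"
    using g(1) unfolding urep_def by (intro mrep_neg mrep_smul)
  moreover have "Q - min Q (Q * (Q - g a)) = Q" using g by simp
  moreover have "Q - min Q (Q * (Q - g b)) = 0"
  proof -
    have "Q \<le> Q * (Q - g b)" using g(3) by simp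
    then show ?thesis by simp
  qed
  ultimately show ?thesis by blast
qed

lemma sep:
  assumes "a \<noteq> b" "a \<le> Q" "b \<le> Q"
  shows "\<exists>g. urep Q g \<and> g a = Q \<and> g b = 0"
proof (cases "b < a")
  case True then show ?thesis using sep_gt2[of b a Q] assms by blast
next
  case False
  then have "Q - b < Q - a" "Q - a \<le> Q" using assms by auto
  then obtain g where g: "urep Q g" "g (Q - a) = Q" "g (Q - b) = 0" using sep_gt2[of "Q - b" "Q - a" Q] by blast
  have n: "urep Q (\<lambda>x. Q - x)" unfolding urep_def by (rule mrep_neg[OF mrep_var])
  have "urep Q (\<lambda>x. g (Q - x))" by (rule urep_comp[OF g(1) n])
  then show ?thesis using g by blast
qed

lemma delta:
  assumes Q: "0 < Q" and a: "a \<le> Q"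
  shows "\<exists>g. urep Q g \<and> g a = Q \<and> (\<forall>x\<le>Q. x \<noteq> a \<longrightarrow> g x = 0)"
proof -
  let ?I = "{x. x \<le> Q \<and> x \<noteq> a}"
  have fin: "finite ?I" by simp
  have ne: "?I \<noteq> {}"
  proof (cases "a = 0")
    case True then have "Q \<in> ?I" using Q by simp
    then show ?thesis by blast
  next
    case False then have "0 \<in> ?I" by simp
    then show ?thesis by blast
  qed
  have "\<forall>x\<in>?I. \<exists>g. urep Q g \<and> g a = Q \<and> g x = 0" using sep a by auto
  then obtain f where f: "\<forall>x\<in>?I. urep Q (f x) \<and> f x a = Q \<and> f x x = 0" by metis
  let ?G = "\<lambda>y. Min ((\<lambda>x. f x y) ` ?I)"
  have "mrep Q (\<lambda>e. Min ((\<lambda>x. f x (e 0)) ` ?I))"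
    by (rule mrep_Min[OF fin ne]) (use f in \<open>auto simp: urep_def\<close>)
  then have u: "urep Q ?G" unfolding urep_def .
  have "?G a = Q"
  proof -
    have "(\<lambda>x. f x a) ` ?I = {Q}" using f ne by auto
    then show ?thesis by simp
  qed
  moreover have "\<forall>x\<le>Q. x \<noteq> a \<longrightarrow> ?G x = 0"
  proof (intro allI impI)
    fix x assume "x \<le> Q" "x \<noteq> a"
    then have "x \<in> ?I" by simp
    then have "?G x \<le> f x x" using fin by (intro Min_le) auto
    then show "?G x = 0" using f \<open>x \<in> ?I\<close> by simp
  qed
  ultimately show ?thesis using u by blast
qed

section \<open>Generation (q prime)\<close>

lemma gen_one:
  assumes p: "prime Q" and b: "0 < b" "b < Q"
  shows "\<exists>g. urep Q g \<and> g b = 1"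
proof -
  let ?S = "{t. \<exists>g. urep Q g \<and> g b = t}"
  have Sle: "?S \<subseteq> {..Q}"
  proof
    fix t assume "t \<in> ?S"
    then obtain g where "urep Q g" "g b = t" by blast
    then have "t \<le> Q" using mrep_le[of Q "\<lambda>e. g (e 0)" "\<lambda>_. b"] b unfolding urep_def bnd_def by auto
    then show "t \<in> {..Q}" by simp
  qed
  let ?P = "{s\<in>?S. 0 < s}"
  have finP: "finite ?P" using Sle finite_subset by (metis (no_types, lifting) finite_atMost finite_Collect_conjI mem_Collect_eq subsetI subset_iff)
  have bP: "b \<in> ?P" using urep_id b by auto
  define s0 where "s0 = Min ?P"
  have s0P: "s0 \<in> ?P" unfolding s0_def using finP bP by (intro Min_in) auto
  have s0min: "\<And>s. s \<in> ?P \<Longrightarrow> s0 \<le> s" unfolding s0_def using finP by (intro Min_le) auto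
  have s0pos: "0 < s0" using s0P by simp
  obtain g0 where g0: "urep Q g0" "g0 b = s0" using s0P by blast
  have modS: "t mod s0 \<in> ?S" if "t \<in> ?S" for t
    using that
  proof (induction t rule: less_induct)
    case (less t)
    show ?case
    proof (cases "t < s0")
      case True then show ?thesis using less.prems by simp
    next
      case False
      obtain g where g: "urep Q g" "g b = t" using less.prems by blast
      have "urep Q (\<lambda>x. g x - g0 x)" using g(1) g0(1) unfolding urep_def by (rule mrep_minus)
      then have "t - s0 \<in> ?S" using g g0 by auto
      moreover have "t - s0 < t" using False s0pos by simp
      ultimately have "(t - s0) mod s0 \<in> ?S" using less.IH by blast
      moreover have "(t - s0) mod s0 = t mod s0" using False by (simp add: le_mod_geq)
      ultimately show ?thesis by simp
    qed
  qed
  have zero: "t mod s0 = 0" if "t \<in> ?S" for t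
  proof (rule ccontr)
    assume "t mod s0 \<noteq> 0"
    then have "t mod s0 \<in> ?P" using modS[OF that] by simp
    then have "s0 \<le> t mod s0" by (rule s0min)
    then show False using mod_less_divisor[OF s0pos, of t] by simp
  qed
  have "Q \<in> ?S" using mrep_top unfolding urep_def by (intro CollectI exI[of _ "\<lambda>_. Q"]) auto
  then have "s0 dvd Q" using zero by (simp add: mod_eq_0_iff_dvd)
  then have "s0 = 1 \<or> s0 = Q" using p by (simp add: prime_nat_iff)
  moreover have "s0 \<le> b" using s0min bP by blast
  ultimately have "s0 = 1" using b by auto
  then show ?thesis using g0 by blast
qed

lemma hit:
  assumes p: "prime Q" and b: "0 < b" "b < Q" and m: "m \<le> Q"
  shows "\<exists>g. urep Q g \<and> g b = m"
proof -
  obtain g where g: "urep Q g" "g b = 1" using gen_one[OF p b] by blast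
  have "urep Q (\<lambda>x. min Q (m * g x))" using g(1) unfolding urep_def by (rule mrep_smul)
  then show ?thesis using g m by (intro exI[of _ "\<lambda>x. min Q (m * g x)"]) auto
qed

lemma gm:
  assumes p: "prime Q" and m: "m \<le> Q"
  shows "\<exists>g. urep Q g \<and> (\<forall>x. 0 < x \<and> x < Q \<longrightarrow> g x = m)"
proof -
  have Q2: "2 \<le> Q" using p prime_ge_2_nat by blast
  then have Q: "0 < Q" "2 \<le> Q" by auto
  let ?I = "{1..<Q}"
  have ne: "?I \<noteq> {}" using Q by simp
  have "\<forall>x\<in>?I. \<exists>g. urep Q g \<and> g x = Q \<and> (\<forall>y\<le>Q. y \<noteq> x \<longrightarrow> g y = 0)" using delta Q by auto
  then obtain d where d: "\<forall>x\<in>?I. urep Q (d x) \<and> d x x = Q \<and> (\<forall>y\<le>Q. y \<noteq> x \<longrightarrow> d x y = 0)" by metis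
  have "\<forall>x\<in>?I. \<exists>g. urep Q g \<and> g x = m" using hit[OF p _ _ m] by auto
  then obtain w where w: "\<forall>x\<in>?I. urep Q (w x) \<and> w x x = m" by metis
  let ?G = "\<lambda>y. Max ((\<lambda>x. min (d x y) (w x y)) ` ?I)"
  have "mrep Q (\<lambda>e. Max ((\<lambda>x. min (d x (e 0)) (w x (e 0))) ` ?I))"
    by (rule mrep_Max) (use d w ne in \<open>auto simp: urep_def intro!: mrep_min\<close>)
  then have u: "urep Q ?G" unfolding urep_def .
  have "\<forall>y. 0 < y \<and> y < Q \<longrightarrow> ?G y = m"
  proof (intro allI impI)
    fix y assume y: "0 < y \<and> y < Q"
    then have yI: "y \<in> ?I" by simp
    show "?G y = m"
    proof (rule Max_eqI)
      show "finite ((\<lambda>x. min (d x y) (w x y)) ` ?I)" by simp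
    next
      fix z assume "z \<in> (\<lambda>x. min (d x y) (w x y)) ` ?I"
      then obtain x where x: "x \<in> ?I" "z = min (d x y) (w x y)" by blast
      show "z \<le> m"
      proof (cases "x = y")
        case True
        have "w x x = m" using bspec[OF w x(1)] by blast
        then show ?thesis using x True by simp
      next
        case False
        have "\<forall>y'\<le>Q. y' \<noteq> x \<longrightarrow> d x y' = 0" using bspec[OF d x(1)] by blast
        then have "d x y = 0" using False y by auto
        then show ?thesis using x by simp
      qed
    next
      have "d y y = Q" using bspec[OF d yI] by blast
      moreover have "w y y = m" using bspec[OF w yI] by blast
      ultimately have mm: "min (d y y) (w y y) = m" using m by simp
      show "m \<in> (\<lambda>x. min (d x y) (w x y)) ` ?I" by (rule image_eqI[where f="\<lambda>x. min (d x y) (w x y)", OF mm[symmetric] yI])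
    qed
  qed
  then show ?thesis using u by blast
qed



definition cfun :: "nat \<Rightarrow> nat \<Rightarrow> nat" where
  "cfun Q x = Q - min Q (Q * (Q - max x (Q - x)))"

lemma urep_cfun: "urep Q (cfun Q)"
  unfolding urep_def cfun_def
  by (intro mrep_neg mrep_smul mrep_max mrep_var)

lemma cfun_val: "0 < Q \<Longrightarrow> x \<le> Q \<Longrightarrow> cfun Q x = (if x = 0 \<or> x = Q then Q else 0)"
proof -
  assume Q: "0 < Q" and x: "x \<le> Q"
  show ?thesis
  proof (cases "x = 0 \<or> x = Q")
    case True then show ?thesis by (auto simp: cfun_def)
  next
    case False
    then have "max x (Q - x) < Q" using x by auto
    then have h1: "1 \<le> Q - max x (Q - x)" by linarith
    have "Q \<le> Q * (Q - max x (Q - x))" using mult_le_mono2[OF h1, of Q] by simp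
    then show ?thesis using False by (simp add: cfun_def)
  qed
qed

definition cl :: "nat \<Rightarrow> nat set \<Rightarrow> (nat \<Rightarrow> nat) \<Rightarrow> bool" where
  "cl Q W e \<longleftrightarrow> (\<forall>i\<in>W. e i = 0 \<or> e i = Q)"

lemma T_lemma:
  assumes p: "prime q" and W: "finite W" "W \<noteq> {}" and m: "m \<le> q" and K: "K = 0 \<or> K = q"
  shows "\<exists>\<phi>. \<forall>e. bnd q e \<longrightarrow> evalN q e \<phi> = (if cl q W e then K else m)"
proof -
  have q: "0 < q" using p prime_gt_0_nat by blast
  obtain g where g: "urep q g" "\<forall>x. 0 < x \<and> x < q \<longrightarrow> g x = m" using gm[OF p m] by blast
  have mK: "mrep q (\<lambda>e. K)" using K mrep_bot mrep_top by auto
  let ?N = "\<lambda>e. Min ((\<lambda>i. cfun q (e i)) ` W)"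
  let ?G = "\<lambda>e. Max ((\<lambda>i. min (q - cfun q (e i)) (g (e i))) ` W)"
  have mN: "mrep q ?N" by (rule mrep_Min[OF W]) (auto intro: urep_on urep_cfun)
  have ug: "urep q (\<lambda>a. min (q - cfun q a) (g a))"
    unfolding urep_def by (rule mrep_min[OF mrep_neg[OF urep_cfun[unfolded urep_def]] g(1)[unfolded urep_def]])
  have mG: "mrep q ?G" by (rule mrep_Max[OF W]) (auto intro: urep_on[OF ug])
  have mT: "mrep q (\<lambda>e. max (min (?N e) K) (?G e))" by (intro mrep_max mrep_min mN mK mG)
  have "mrep q (\<lambda>e. if cl q W e then K else m)"
  proof (rule mrep_cong[OF mT])
    fix e assume e: "bnd q e"
    have ev: "\<And>i. e i \<le> q" using e unfolding bnd_def by blast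
    show "max (min (?N e) K) (?G e) = (if cl q W e then K else m)"
    proof (cases "cl q W e")
      case True
      then have c: "\<And>i. i \<in> W \<Longrightarrow> cfun q (e i) = q" using cfun_val[OF q ev] unfolding cl_def by auto
      have "(\<lambda>i. cfun q (e i)) ` W = {q}" using c W(2) by auto
      then have N: "?N e = q" by simp
      have "(\<lambda>i. min (q - cfun q (e i)) (g (e i))) ` W = {0}" using c W(2) by auto
      then have G: "?G e = 0" by simp
      show ?thesis using N G True K by auto
    next
      case False
      then obtain i0 where i0: "i0 \<in> W" "e i0 \<noteq> 0" "e i0 \<noteq> q" unfolding cl_def by blast
      have c0: "cfun q (e i0) = 0" using cfun_val[OF q ev] i0 by simp
      have "?N e \<le> cfun q (e i0)" using W i0 by (intro Min_le) auto
      then have N: "?N e = 0" using c0 by simp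
      have G: "?G e = m"
      proof (rule Max_eqI)
        show "finite ((\<lambda>i. min (q - cfun q (e i)) (g (e i))) ` W)" using W by simp
      next
        fix z assume "z \<in> (\<lambda>i. min (q - cfun q (e i)) (g (e i))) ` W"
        then obtain i where i: "i \<in> W" "z = min (q - cfun q (e i)) (g (e i))" by blast
        show "z \<le> m"
        proof (cases "e i = 0 \<or> e i = q")
          case True then have "cfun q (e i) = q" using cfun_val[OF q ev] by auto
          then show ?thesis using i by simp
        next
          case False then have "0 < e i \<and> e i < q" using ev[of i] by auto
          then have "g (e i) = m" using g(2) by blast
          then show ?thesis using i by simp
        qed
      next
        have "0 < e i0 \<and> e i0 < q" using i0 ev[of i0] by auto
        then have "g (e i0) = m" using g(2) by blast
        then have mm: "min (q - cfun q (e i0)) (g (e i0)) = m" using c0 m by simp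
        show "m \<in> (\<lambda>i. min (q - cfun q (e i)) (g (e i))) ` W"
          by (rule image_eqI[where f="\<lambda>i. min (q - cfun q (e i)) (g (e i))", OF mm[symmetric] i0(1)])
      qed
      show ?thesis using N G False by simp
    qed
  qed
  then show ?thesis unfolding mrep_def .
qed

lemma classical_red:
  assumes q: "0 < q" and e: "bnd q e" and c: "cl q W e" and v: "vars \<chi> \<subseteq> W"
  shows "evalN q e \<chi> = q * evalN 1 (\<lambda>n. if e n = q then 1 else 0) \<chi>"
    and "bnd 1 (\<lambda>n. if e n = q then 1 else 0)"
proof -
  show b: "bnd 1 (\<lambda>n. if e n = q then 1 else 0)" by (simp add: bnd_def)
  have "evalN q e \<chi> = evalN q (\<lambda>n. q * (if e n = q then 1 else 0)) \<chi>"
  proof (rule evalN_cong)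
    fix n assume "n \<in> vars \<chi>"
    then have "e n = 0 \<or> e n = q" using c v unfolding cl_def by blast
    then show "e n = q * (if e n = q then 1 else 0)" using q by auto
  qed
  also have "\<dots> = q * evalN 1 (\<lambda>n. if e n = q then 1 else 0) \<chi>" by (rule evalN_embed[OF b])
  finally show "evalN q e \<chi> = q * evalN 1 (\<lambda>n. if e n = q then 1 else 0) \<chi>" .
qed

lemma use_rule:
  assumes cr: "consequence_relation L'" and st: "structural L'" and w: "weaker_eq M L'"
    and r: "L' \<Gamma> \<phi>" and i: "\<forall>\<gamma>\<in>\<Gamma>. M \<Delta> (subst \<sigma> \<gamma>)" and ii: "M (insert (subst \<sigma> \<phi>) \<Delta>) \<psi>"
  shows "L' \<Delta> \<psi>"
proof -
  have refl: "\<And>G x. x \<in> G \<Longrightarrow> L' G x" and cut: "\<And>G D x. (\<forall>y\<in>D. L' G y) \<Longrightarrow> L' D x \<Longrightarrow> L' G x"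
    using cr unfolding consequence_relation_def by blast+
  have "\<forall>y\<in>subst \<sigma> ` \<Gamma>. L' \<Delta> y" using i w unfolding weaker_eq_def by blast
  moreover have "L' (subst \<sigma> ` \<Gamma>) (subst \<sigma> \<phi>)" using st r unfolding structural_def by blast
  ultimately have s: "L' \<Delta> (subst \<sigma> \<phi>)" by (rule cut)
  have "\<forall>y\<in>insert (subst \<sigma> \<phi>) \<Delta>. L' \<Delta> y" using s refl by blast
  moreover have "L' (insert (subst \<sigma> \<phi>) \<Delta>) \<psi>" using ii w unfolding weaker_eq_def by blast
  ultimately show ?thesis by (rule cut)
qed

lemma reduce_finite:
  assumes cr: "consequence_relation L'" and fin: "finitary M"
    and h: "\<And>\<Delta> \<psi>. finite \<Delta> \<Longrightarrow> M \<Delta> \<psi> \<Longrightarrow> L' \<Delta> \<psi>"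
  shows "weaker_eq M L'"
  unfolding weaker_eq_def
proof (intro allI impI)
  fix \<Delta> \<psi> assume "M \<Delta> \<psi>"
  then obtain \<Delta>0 where "\<Delta>0 \<subseteq> \<Delta>" "finite \<Delta>0" "M \<Delta>0 \<psi>" using fin unfolding finitary_def by blast
  then have "L' \<Delta>0 \<psi>" "\<Delta>0 \<subseteq> \<Delta>" using h by auto
  then show "L' \<Delta> \<psi>" using cr unfolding consequence_relation_def by blast
qed

lemma subst_eval:
  assumes \<sigma>: "\<forall>p. \<forall>e. bnd q e \<longrightarrow> evalN q e (\<sigma> p) = (if cl q W e then A p else B p)"
    and e: "bnd q e"
  shows "evalN q e (subst \<sigma> \<chi>) = evalN q (if cl q W e then A else B) \<chi>"
proof -
  have "(\<lambda>n. evalN q e (\<sigma> n)) = (if cl q W e then A else B)" using \<sigma> e by auto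
  then show ?thesis by (simp add: evalN_subst)
qed



lemma D1:
  assumes p: "prime q" and j: "0 < j" "j \<le> q"
    and cr: "consequence_relation L'" and st: "structural L'" and w: "weaker_eq (LN q j) L'"
    and r: "L' \<Gamma> \<phi>" and c: "LN 1 1 \<Gamma> \<phi>" and nb: "\<not> LB q j \<Gamma> \<phi>"
  shows "weaker_eq (LN 1 1) L'"
proof -
  have q: "0 < q" using p prime_gt_0_nat by blast
  obtain e1 e2 where e1: "bnd q e1" and e2: "bnd 1 e2"
    and g: "\<forall>\<psi>\<in>\<Gamma>. j \<le> evalN q e1 \<psi> \<and> 1 \<le> evalN 1 e2 \<psi>"
    and n: "\<not> (j \<le> evalN q e1 \<phi> \<and> 1 \<le> evalN 1 e2 \<phi>)"
    using nb unfolding LB_def by blast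
  have "1 \<le> evalN 1 e2 \<phi>" using c e2 g unfolding LN_def by blast
  then have e1\<phi>: "evalN q e1 \<phi> < j" using n by simp
  have finC: "finitary (LN 1 1)" using CPL_props(3) CPL_LN by simp
  show ?thesis
  proof (rule reduce_finite[OF cr finC])
    fix \<Delta> \<psi> assume fin: "finite \<Delta>" and h: "LN 1 1 \<Delta> \<psi>"
    define W where "W = insert 0 (vars \<psi> \<union> \<Union>(vars ` \<Delta>))"
    have W: "finite W" "W \<noteq> {}" unfolding W_def using fin finite_vars by auto
    have "\<forall>p. \<exists>\<chi>. \<forall>e. bnd q e \<longrightarrow> evalN q e \<chi> = (if cl q W e then q * e2 p else e1 p)"
    proof
      fix p
      have "e1 p \<le> q" "e2 p \<le> 1" using e1 e2 unfolding bnd_def by auto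
      then have "q * e2 p = 0 \<or> q * e2 p = q" "e1 p \<le> q" by (auto simp: le_Suc_eq)
      then show "\<exists>\<chi>. \<forall>e. bnd q e \<longrightarrow> evalN q e \<chi> = (if cl q W e then q * e2 p else e1 p)"
        using T_lemma[OF p W] by blast
    qed
    then obtain \<sigma> where \<sigma>: "\<forall>p. \<forall>e. bnd q e \<longrightarrow> evalN q e (\<sigma> p) = (if cl q W e then q * e2 p else e1 p)"
      by metis
    have b2: "bnd q (\<lambda>p. q * e2 p)" using e2 unfolding bnd_def by (auto simp: le_Suc_eq)
    show "L' \<Delta> \<psi>"
    proof (rule use_rule[OF cr st w r])
      show "\<forall>\<gamma>\<in>\<Gamma>. LN q j \<Delta> (subst \<sigma> \<gamma>)"
      proof (intro ballI, unfold LN_def, intro allI impI)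
        fix \<gamma> e assume \<gamma>: "\<gamma> \<in> \<Gamma>" and e: "bnd q e"
        have ev: "evalN q e (subst \<sigma> \<gamma>) = evalN q (if cl q W e then (\<lambda>p. q * e2 p) else e1) \<gamma>"
          by (rule subst_eval[OF \<sigma> e])
        show "j \<le> evalN q e (subst \<sigma> \<gamma>)"
        proof (cases "cl q W e")
          case True
          have "1 \<le> evalN 1 e2 \<gamma>" using g \<gamma> by blast
          then have "q \<le> q * evalN 1 e2 \<gamma>" by simp
          then have "j \<le> q * evalN 1 e2 \<gamma>" using j by linarith
          then show ?thesis using ev True evalN_embed[OF e2, of q \<gamma>] by simp
        next
          case False then show ?thesis using ev g \<gamma> by simp
        qed
      qed
    next
      show "LN q j (insert (subst \<sigma> \<phi>) \<Delta>) \<psi>"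
        unfolding LN_def
      proof (intro allI impI)
        fix e assume e: "bnd q e" and hy: "\<forall>\<chi>\<in>insert (subst \<sigma> \<phi>) \<Delta>. j \<le> evalN q e \<chi>"
        have ev: "evalN q e (subst \<sigma> \<phi>) = evalN q (if cl q W e then (\<lambda>p. q * e2 p) else e1) \<phi>"
          by (rule subst_eval[OF \<sigma> e])
        show "j \<le> evalN q e \<psi>"
        proof (cases "cl q W e")
          case True
          let ?e' = "\<lambda>n. if e n = q then 1 else 0"
          have b': "bnd 1 ?e'" by (simp add: bnd_def)
          have "\<forall>\<delta>\<in>\<Delta>. 1 \<le> evalN 1 ?e' \<delta>"
          proof
            fix \<delta> assume d: "\<delta> \<in> \<Delta>"
            have "vars \<delta> \<subseteq> W" using d unfolding W_def by auto
            then have "evalN q e \<delta> = q * evalN 1 ?e' \<delta>" using classical_red(1)[OF q e True] by blast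
            moreover have "j \<le> evalN q e \<delta>" using hy d by blast
            ultimately show "1 \<le> evalN 1 ?e' \<delta>" using j by (cases "evalN 1 ?e' \<delta>") auto
          qed
          then have "1 \<le> evalN 1 ?e' \<psi>" using h b' unfolding LN_def by blast
          moreover have "vars \<psi> \<subseteq> W" unfolding W_def by auto
          then have "evalN q e \<psi> = q * evalN 1 ?e' \<psi>" using classical_red(1)[OF q e True] by blast
          ultimately have "q \<le> evalN q e \<psi>" by simp
          then show ?thesis using j by simp
        next
          case False
          then have "evalN q e (subst \<sigma> \<phi>) < j" using ev e1\<phi> by simp
          then show ?thesis using hy by auto
        qed
      qed
    qed
  qed
qed

lemma D2:
  assumes p: "prime q" and j: "0 < j" "j \<le> q"
    and cr: "consequence_relation L'" and st: "structural L'" and w: "weaker_eq (LN q j) L'"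
    and r: "L' \<Gamma> \<phi>" and c: "LB q j \<Gamma> \<phi>" and nb: "\<not> LN q j \<Gamma> \<phi>"
  shows "weaker_eq (LB q j) L'"
proof -
  have q: "0 < q" using p prime_gt_0_nat by blast
  have ncs: "\<not> csat \<Gamma>" using c nb LB_alt[OF j] by blast
  obtain e1 where e1: "bnd q e1" and g: "\<forall>\<psi>\<in>\<Gamma>. j \<le> evalN q e1 \<psi>" and e1\<phi>: "evalN q e1 \<phi> < j"
    using nb unfolding LN_def by (auto simp: not_le)
  have finB: "finitary (LB q j)" using Lqbar_props(3)[OF q] Lqbar_LB[OF q] by simp
  show ?thesis
  proof (rule reduce_finite[OF cr finB])
    fix \<Delta> \<psi> assume fin: "finite \<Delta>" and h: "LB q j \<Delta> \<psi>"
    show "L' \<Delta> \<psi>"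
    proof (cases "LN q j \<Delta> \<psi>")
      case True then show ?thesis using w unfolding weaker_eq_def by blast
    next
      case False
      then have nc: "\<not> csat \<Delta>" using h LB_alt[OF j] by blast
      define W where "W = insert 0 (vars \<psi> \<union> \<Union>(vars ` \<Delta>))"
      have W: "finite W" "W \<noteq> {}" unfolding W_def using fin finite_vars by auto
      have "\<forall>p. \<exists>\<chi>. \<forall>e. bnd q e \<longrightarrow> evalN q e \<chi> = (if cl q W e then (\<lambda>_. 0) p else e1 p)"
      proof
        fix p
        have "e1 p \<le> q" using e1 unfolding bnd_def by auto
        then show "\<exists>\<chi>. \<forall>e. bnd q e \<longrightarrow> evalN q e \<chi> = (if cl q W e then (\<lambda>_. 0) p else e1 p)"
          using T_lemma[OF p W, of "e1 p" 0] by simp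
      qed
      then obtain \<sigma> where \<sigma>: "\<forall>p. \<forall>e. bnd q e \<longrightarrow> evalN q e (\<sigma> p) = (if cl q W e then (\<lambda>_. 0) p else e1 p)"
        by metis
      have noncl: "\<not> cl q W e" if e: "bnd q e" and hy: "\<forall>\<delta>\<in>\<Delta>. j \<le> evalN q e \<delta>" for e
      proof
        assume True: "cl q W e"
        let ?e' = "\<lambda>n. if e n = q then 1 else 0"
        have b': "bnd 1 ?e'" by (simp add: bnd_def)
        have "\<forall>\<delta>\<in>\<Delta>. 1 \<le> evalN 1 ?e' \<delta>"
        proof
          fix \<delta> assume d: "\<delta> \<in> \<Delta>"
          have "vars \<delta> \<subseteq> W" using d unfolding W_def by auto
          then have "evalN q e \<delta> = q * evalN 1 ?e' \<delta>" using classical_red(1)[OF q e True] by blast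
          moreover have "j \<le> evalN q e \<delta>" using hy d by blast
          ultimately show "1 \<le> evalN 1 ?e' \<delta>" using j by (cases "evalN 1 ?e' \<delta>") auto
        qed
        then show False using nc b' unfolding csat_def by blast
      qed
      show ?thesis
      proof (rule use_rule[OF cr st w r])
        show "\<forall>\<gamma>\<in>\<Gamma>. LN q j \<Delta> (subst \<sigma> \<gamma>)"
        proof (intro ballI, unfold LN_def, intro allI impI)
          fix \<gamma> e assume \<gamma>: "\<gamma> \<in> \<Gamma>" and e: "bnd q e" and hy: "\<forall>\<delta>\<in>\<Delta>. j \<le> evalN q e \<delta>"
          have ev: "evalN q e (subst \<sigma> \<gamma>) = evalN q (if cl q W e then (\<lambda>_. 0) else e1) \<gamma>"
            by (rule subst_eval[OF \<sigma> e])
          show "j \<le> evalN q e (subst \<sigma> \<gamma>)" using noncl[OF e hy] ev g \<gamma> by simp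
        qed
      next
        show "LN q j (insert (subst \<sigma> \<phi>) \<Delta>) \<psi>"
          unfolding LN_def
        proof (intro allI impI)
          fix e assume e: "bnd q e" and hy: "\<forall>\<chi>\<in>insert (subst \<sigma> \<phi>) \<Delta>. j \<le> evalN q e \<chi>"
          have ev: "evalN q e (subst \<sigma> \<phi>) = evalN q (if cl q W e then (\<lambda>_. 0) else e1) \<phi>"
            by (rule subst_eval[OF \<sigma> e])
          have "\<not> cl q W e" using noncl[OF e] hy by blast
          then have "evalN q e (subst \<sigma> \<phi>) < j" using ev e1\<phi> by simp
          then show "j \<le> evalN q e \<psi>" using hy by auto
        qed
      qed
    qed
  qed
qed



lemma we_antisym: "weaker_eq A B \<Longrightarrow> weaker_eq B A \<Longrightarrow> A = B"
  unfolding weaker_eq_def by (intro ext) blast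

lemma we_trans: "weaker_eq A B \<Longrightarrow> weaker_eq B C \<Longrightarrow> weaker_eq A C"
  unfolding weaker_eq_def by blast

context
  fixes q j :: nat
  assumes p: "prime q" and j: "0 < j" "j \<le> q"
begin

lemma q0: "0 < q" using p prime_gt_0_nat by blast
lemma q2: "2 \<le> q" using p prime_ge_2_nat by blast

lemma LB_cr: "consequence_relation (LB q j)" using Lqbar_props(1)[OF q0] Lqbar_LB[OF q0] by simp
lemma LB_st: "structural (LB q j)" using Lqbar_props(2)[OF q0] Lqbar_LB[OF q0] by simp
lemma LB_fin: "finitary (LB q j)" using Lqbar_props(3)[OF q0] Lqbar_LB[OF q0] by simp
lemma C_cr: "consequence_relation (LN 1 1)" using CPL_props(1) CPL_LN by simp
lemma C_st: "structural (LN 1 1)" using CPL_props(2) CPL_LN by simp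

lemma LN_LB: "weaker_eq (LN q j) (LB q j)"
  unfolding weaker_eq_def using LB_alt[OF j] by blast

lemma LB_C: "weaker_eq (LB q j) (LN 1 1)"
  unfolding weaker_eq_def
proof (intro allI impI)
  fix \<Gamma> \<phi> assume "LB q j \<Gamma> \<phi>"
  then have "LN q j \<Gamma> \<phi> \<or> \<not> csat \<Gamma>" using LB_alt[OF j] by blast
  then show "LN 1 1 \<Gamma> \<phi>"
  proof
    assume "LN q j \<Gamma> \<phi>" then show ?thesis by (rule LN_CPL[OF j])
  next
    assume "\<not> csat \<Gamma>" then show ?thesis unfolding csat_def LN_def by blast
  qed
qed

lemma witness:
  obtains Cf where "LN 1 1 {} Cf" "\<not> LB q j {} Cf"
    "LB q j {Neg Cf} (Neg (Imp (Var 0) (Var 0)))" "\<not> LN q j {Neg Cf} (Neg (Imp (Var 0) (Var 0)))"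
proof -
  obtain Cf where Cf: "\<forall>e. bnd q e \<longrightarrow> evalN q e Cf = cfun q (e 0)"
    using urep_cfun[of q] unfolding urep_def mrep_def by blast
  have one: "evalN 1 e2 Cf = 1" if e2: "bnd 1 e2" for e2
  proof -
    have b2: "bnd q (\<lambda>n. q * e2 n)" using e2 unfolding bnd_def by (auto simp: le_Suc_eq)
    have "e2 0 \<le> 1" using e2 unfolding bnd_def by auto
    then have "q * e2 0 = 0 \<or> q * e2 0 = q" by (auto simp: le_Suc_eq)
    then have "cfun q (q * e2 0) = q" using cfun_val[OF q0] by auto
    then have E: "evalN q (\<lambda>n. q * e2 n) Cf = q" using Cf b2 by simp
    have "q * evalN 1 e2 Cf = q" by (rule trans[OF sym[OF evalN_embed[OF e2, of q Cf]] E])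
    then have "q * evalN 1 e2 Cf = q * 1" by simp
    then show ?thesis using q0 mult_left_cancel[of q "evalN 1 e2 Cf" 1] by linarith
  qed
  let ?e = "\<lambda>_::nat. 1::nat"
  have be: "bnd q ?e" using q2 by (simp add: bnd_def)
  have z: "evalN q ?e Cf = 0" using Cf be cfun_val[OF q0, of 1] q2 by simp
  have w1: "LN 1 1 {} Cf" unfolding LN_def using one by simp
  have nl: "\<not> LN q j {} Cf" unfolding LN_def using be z j by auto
  have cs: "csat {}" unfolding csat_def by (rule exI[of _ "\<lambda>_. 0"]) (simp add: bnd_def)
  have w2: "\<not> LB q j {} Cf" using LB_alt[OF j] nl cs by blast
  have nl2: "\<not> LN q j {Neg Cf} (Neg (Imp (Var 0) (Var 0)))" unfolding LN_def using be z j by auto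
  have ncs: "\<not> csat {Neg Cf}" unfolding csat_def using one by auto
  have w3: "LB q j {Neg Cf} (Neg (Imp (Var 0) (Var 0)))" using LB_alt[OF j] ncs by blast
  show ?thesis using that w1 w2 w3 nl2 by blast
qed

lemma LB_ne_C: "LB q j \<noteq> LN 1 1"
proof
  assume eq: "LB q j = LN 1 1"
  obtain Cf where "LN 1 1 {} Cf" "\<not> LB q j {} Cf" by (rule witness)
  then show False using eq by simp
qed

lemma LN_ne_LB: "LN q j \<noteq> LB q j"
proof
  assume eq: "LN q j = LB q j"
  obtain Cf where "LB q j {Neg Cf} (Neg (Imp (Var 0) (Var 0)))" "\<not> LN q j {Neg Cf} (Neg (Imp (Var 0) (Var 0)))"
    by (rule witness)
  then show False using eq by simp
qed

lemma clause5:
  assumes L: "finitary_structural_logic L"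
  shows "strictly_weaker (LN q j) L \<and> strictly_weaker L (LN 1 1) \<longleftrightarrow> L = LB q j"
proof
  assume "L = LB q j"
  then show "strictly_weaker (LN q j) L \<and> strictly_weaker L (LN 1 1)"
    unfolding strictly_weaker_def using LN_LB LB_C LB_ne_C LN_ne_LB by simp
next
  assume h: "strictly_weaker (LN q j) L \<and> strictly_weaker L (LN 1 1)"
  have cr: "consequence_relation L" and st: "structural L" using L unfolding finitary_structural_logic_def by auto
  have w1: "weaker_eq (LN q j) L" "LN q j \<noteq> L" and w2: "weaker_eq L (LN 1 1)" "L \<noteq> LN 1 1"
    using h unfolding strictly_weaker_def by auto
  have s1: "weaker_eq L (LB q j)"
  proof (rule ccontr)
    assume "\<not> weaker_eq L (LB q j)"
    then obtain \<Gamma> \<phi> where r: "L \<Gamma> \<phi>" "\<not> LB q j \<Gamma> \<phi>" unfolding weaker_eq_def by blast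
    have "LN 1 1 \<Gamma> \<phi>" using w2(1) r unfolding weaker_eq_def by blast
    then have "weaker_eq (LN 1 1) L" using D1[OF p j cr st w1(1) r(1) _ r(2)] by blast
    then show False using we_antisym[OF w2(1)] w2(2) by blast
  qed
  have s2: "weaker_eq (LB q j) L"
  proof -
    have "\<not> weaker_eq L (LN q j)" using we_antisym[OF w1(1)] w1(2) by blast
    then obtain \<Gamma> \<phi> where r: "L \<Gamma> \<phi>" "\<not> LN q j \<Gamma> \<phi>" unfolding weaker_eq_def by blast
    have "LB q j \<Gamma> \<phi>" using s1 r unfolding weaker_eq_def by blast
    then show ?thesis using D2[OF p j cr st w1(1) r(1) _ r(2)] by blast
  qed
  show "L = LB q j" using we_antisym[OF s1 s2] .
qed

lemma SM: "strongly_maximal (LB q j) (LN 1 1)"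
  unfolding strongly_maximal_def
proof (intro conjI allI impI)
  show "strictly_weaker (LB q j) (LN 1 1)" unfolding strictly_weaker_def using LB_C LB_ne_C by blast
next
  fix \<Gamma> \<phi> assume a: "finite \<Gamma> \<and> LN 1 1 \<Gamma> \<phi> \<and> \<not> LB q j \<Gamma> \<phi>"
  show "extend_by_rule (LB q j) \<Gamma> \<phi> = LN 1 1"
  proof (intro ext iffI)
    fix \<Delta> \<psi> assume "extend_by_rule (LB q j) \<Gamma> \<phi> \<Delta> \<psi>"
    then show "LN 1 1 \<Delta> \<psi>" unfolding extend_by_rule_def using C_cr C_st LB_C a by blast
  next
    fix \<Delta> \<psi> assume h: "LN 1 1 \<Delta> \<psi>"
    show "extend_by_rule (LB q j) \<Gamma> \<phi> \<Delta> \<psi>" unfolding extend_by_rule_def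
    proof (intro allI impI)
      fix L' assume L': "consequence_relation L' \<and> structural L' \<and> weaker_eq (LB q j) L' \<and> L' \<Gamma> \<phi>"
      have w: "weaker_eq (LN q j) L'" using we_trans[OF LN_LB] L' by blast
      have "weaker_eq (LN 1 1) L'" using D1[OF p j _ _ w _ _] L' a by blast
      then show "L' \<Delta> \<psi>" using h unfolding weaker_eq_def by blast
    qed
  qed
qed

lemma clause4:
  assumes L: "finitary_structural_logic L" and sm: "strongly_maximal L (LN 1 1)" and w: "weaker_eq (LN q j) L"
  shows "L = LB q j"
proof -
  have sw: "strictly_weaker L (LN 1 1)" using sm unfolding strongly_maximal_def by blast
  have "L \<noteq> LN q j"
  proof
    assume eq: "L = LN q j"
    obtain Cf where W: "LN 1 1 {} Cf" "\<not> LB q j {} Cf"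
      "LB q j {Neg Cf} (Neg (Imp (Var 0) (Var 0)))" "\<not> LN q j {Neg Cf} (Neg (Imp (Var 0) (Var 0)))"
      by (rule witness)
    have c: "LN 1 1 {Neg Cf} (Neg (Imp (Var 0) (Var 0)))" using W(3) LB_C unfolding weaker_eq_def by blast
    have "extend_by_rule (LN q j) {Neg Cf} (Neg (Imp (Var 0) (Var 0))) = LN 1 1"
      using sm eq c W(4) unfolding strongly_maximal_def by simp
    then have "extend_by_rule (LN q j) {Neg Cf} (Neg (Imp (Var 0) (Var 0))) {} Cf" using W(1) by simp
    then have "LB q j {} Cf" unfolding extend_by_rule_def using LB_cr LB_st LN_LB W(3) by blast
    then show False using W(2) by blast
  qed
  then have "strictly_weaker (LN q j) L" using w unfolding strictly_weaker_def by blast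
  then show ?thesis using clause5[OF L] sw by blast
qed

end

theorem corollary5p8:
  fixes q j :: nat
  assumes "prime q" and "0 < j" and "j \<le> q"
  shows "finitary_structural_logic (Lqbar j q) \<and>
         strongly_maximal (Lqbar j q) CPL \<and> weaker_eq (Lq j q) (Lqbar j q) \<and>
         (\<forall>L. finitary_structural_logic L \<and> strongly_maximal L CPL \<and> weaker_eq (Lq j q) L
              \<longrightarrow> L = Lqbar j q) \<and>
         (\<forall>L. finitary_structural_logic L \<longrightarrow>
              (strictly_weaker (Lq j q) L \<and> strictly_weaker L CPL \<longleftrightarrow> L = Lqbar j q))"
proof -
  have q: "0 < q" using assms(1) prime_gt_0_nat by blast
  have fs: "finitary_structural_logic (LB q j)"
    unfolding finitary_structural_logic_def using LB_cr LB_st LB_fin assms by blast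
  show ?thesis
    unfolding Lq_LN[OF q] CPL_LN Lqbar_LB[OF q]
    using fs SM[OF assms] LN_LB[OF assms] clause4[OF assms] clause5[OF assms] by blast
qed


end
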